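(* Let $\omega_1$ be the first uncountable ordinal, and let $(S_\alpha, f_{\alpha\beta})_{\alpha\le\beta\in\omega_1}$ be an inverse system of nonempty sets $S_\alpha$ and surjective maps $f_{\alpha\beta}:S_\beta\to S_\alpha$ (with $f_{\alpha\alpha}=\mathrm{id}$ and $f_{\alpha\beta}f_{\beta\gamma}=f_{\alpha\gamma}$ for $\alpha\le\beta\le\gamma$) whose inverse limit is empty. Let $R$ be a ring and $N$ a left $R$-module. For $\alpha\in\omega_1$ let $\bigoplus_{S_\alpha}N$ be the direct sum of copies of $N$ indexed by $S_\alpha$, and for $\alpha\le\beta$ let $\varphi_{\alpha\beta}:\bigoplus_{S_\beta}N\to\bigoplus_{S_\alpha}N$ send $(x_j)_{j\in S_\beta}$ to $(y_i)_{i\in S_\alpha}$ with $y_i=\sum_{j\in S_\beta,\ f_{\alpha\beta}(j)=i}x_j$. Then each $\varphi_{\alpha\beta}$ is surjective, and the inverse limit of the system $(\bigoplus_{S_\alpha}N,\varphi_{\alpha\beta})$ is the zero module.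
   Context: Rings are associative with unit, modules are unital. Elements of a direct sum have only finitely many nonzero components, so the sums defining $y_i$ are finite in effect. *)

theory Defs
  imports Main "HOL-Library.Countable_Set"
begin

definition left_module :: "('r::ring_1 \<Rightarrow> 'n::ab_group_add \<Rightarrow> 'n) \<Rightarrow> bool" where
  "left_module sc \<longleftrightarrow>
     (\<forall>a x y. sc a (x + y) = sc a x + sc a y) \<and>
     (\<forall>a b x. sc (a + b) x = sc a x + sc b x) \<and>
     (\<forall>a b x. sc (a * b) x = sc a (sc b x)) \<and>
     (\<forall>x. sc 1 x = x)"

definition is_omega1_type :: "'i::wellorder itself \<Rightarrow> bool" where
  "is_omega1_type _ \<longleftrightarrow> \<not> countable (UNIV :: 'i set) \<and> (\<forall>a::'i. countable {b. b < a})"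

definition dirsum :: "'a set \<Rightarrow> ('a \<Rightarrow> 'n::zero) set" where
  "dirsum S = {x. finite {j. x j \<noteq> 0} \<and> (\<forall>j. j \<notin> S \<longrightarrow> x j = 0)}"

text \<open>The induced map: y_i = sum of x_j over j in S_beta with f(j) = i (a finite sum,
  taken over the support of x).\<close>
definition dirsum_map :: "'a set \<Rightarrow> 'a set \<Rightarrow> ('a \<Rightarrow> 'a) \<Rightarrow> ('a \<Rightarrow> 'n::comm_monoid_add) \<Rightarrow> ('a \<Rightarrow> 'n)" where
  "dirsum_map Sa Sb f x = (\<lambda>i. if i \<in> Sa then (\<Sum>j \<in> {j \<in> Sb. f j = i \<and> x j \<noteq> 0}. x j) else 0)"

definition inv_lim :: "('i::order \<Rightarrow> 'a set) \<Rightarrow> ('i \<Rightarrow> 'i \<Rightarrow> 'a \<Rightarrow> 'a) \<Rightarrow> ('i \<Rightarrow> 'a) set" where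
  "inv_lim S f = {s. (\<forall>a. s a \<in> S a) \<and> (\<forall>a b. a \<le> b \<longrightarrow> f a b (s b) = s a)}"

end

theory Submission
  imports Defs
begin

lemma dm_supp:
  assumes "dirsum_map Sa Sb f x i \<noteq> 0"
  shows "i \<in> Sa \<and> (\<exists>j. j \<in> Sb \<and> f j = i \<and> x j \<noteq> 0)"
proof -
  have "i \<in> Sa" using assms by (auto simp: dirsum_map_def split: if_splits)
  moreover have "{j \<in> Sb. f j = i \<and> x j \<noteq> 0} \<noteq> {}"
  proof
    assume "{j \<in> Sb. f j = i \<and> x j \<noteq> 0} = {}"
    hence "dirsum_map Sa Sb f x i = 0" by (simp add: dirsum_map_def)
    thus False using assms by simp
  qed
  ultimately show ?thesis by blast
qed

lemma dm_in:
  assumes "x \<in> dirsum Sb"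
  shows "dirsum_map Sa Sb f x \<in> (dirsum Sa :: ('a \<Rightarrow> 'n::comm_monoid_add) set)"
proof -
  have fin: "finite {j. x j \<noteq> 0}" using assms by (simp add: dirsum_def)
  have "{i. dirsum_map Sa Sb f x i \<noteq> 0} \<subseteq> f ` {j. x j \<noteq> 0}"
    using dm_supp by fastforce
  hence "finite {i. dirsum_map Sa Sb f x i \<noteq> 0}" using fin finite_subset by blast
  moreover have "\<forall>i. i \<notin> Sa \<longrightarrow> dirsum_map Sa Sb f x i = 0"
    by (simp add: dirsum_map_def)
  ultimately show ?thesis by (simp add: dirsum_def)
qed

lemma dm_surj:
  assumes su: "f ` Sb = Sa" and y: "y \<in> (dirsum Sa :: ('a \<Rightarrow> 'n::comm_monoid_add) set)"
  shows "y \<in> dirsum_map Sa Sb f ` dirsum Sb"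
proof -
  define g where "g i = (SOME j. j \<in> Sb \<and> f j = i)" for i
  have g: "g i \<in> Sb \<and> f (g i) = i" if "i \<in> Sa" for i
  proof -
    have "\<exists>j. j \<in> Sb \<and> f j = i" using su that by blast
    thus ?thesis unfolding g_def by (rule someI_ex)
  qed
  define x where "x j = (if j \<in> Sb \<and> f j \<in> Sa \<and> g (f j) = j then y (f j) else 0)" for j
  have yfin: "finite {i. y i \<noteq> 0}" and y0: "\<And>i. i \<notin> Sa \<Longrightarrow> y i = 0"
    using y by (auto simp: dirsum_def)
  have "{j. x j \<noteq> 0} \<subseteq> g ` {i. y i \<noteq> 0}"
  proof
    fix j assume "j \<in> {j. x j \<noteq> 0}"
    hence "x j \<noteq> 0" by simp
    hence c: "g (f j) = j" and "y (f j) \<noteq> 0" by (simp_all add: x_def split: if_splits)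
    show "j \<in> g ` {i. y i \<noteq> 0}"
      by (rule image_eqI[where x="f j"]) (use c \<open>y (f j) \<noteq> 0\<close> in simp_all)
  qed
  hence "finite {j. x j \<noteq> 0}" using yfin finite_subset by blast
  moreover have "\<forall>j. j \<notin> Sb \<longrightarrow> x j = 0" by (simp add: x_def)
  ultimately have xin: "x \<in> dirsum Sb" unfolding dirsum_def by blast
  have "dirsum_map Sa Sb f x i = y i" for i
  proof (cases "i \<in> Sa")
    case False thus ?thesis using y0 by (simp add: dirsum_map_def)
  next
    case True
    show ?thesis
    proof (cases "y i = 0")
      case True
      hence "{j \<in> Sb. f j = i \<and> x j \<noteq> 0} = {}" by (auto simp: x_def)
      thus ?thesis using True \<open>i \<in> Sa\<close> by (simp add: dirsum_map_def)
    next
      case False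
      have xg: "x (g i) = y i" using g[OF \<open>i \<in> Sa\<close>] \<open>i \<in> Sa\<close> by (simp add: x_def)
      have "{j \<in> Sb. f j = i \<and> x j \<noteq> 0} = {g i}"
      proof (rule set_eqI, rule iffI)
        fix j assume "j \<in> {j \<in> Sb. f j = i \<and> x j \<noteq> 0}"
        hence "f j = i" "x j \<noteq> 0" by auto
        hence "g (f j) = j" by (simp add: x_def split: if_splits)
        thus "j \<in> {g i}" using \<open>f j = i\<close> by simp
      next
        fix j assume "j \<in> {g i}"
        thus "j \<in> {j \<in> Sb. f j = i \<and> x j \<noteq> 0}" using g[OF \<open>i \<in> Sa\<close>] xg False by simp
      qed
      moreover note xg
      ultimately show ?thesis using \<open>i \<in> Sa\<close> by (simp add: dirsum_map_def)
    qed
  qed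
  hence "y = dirsum_map Sa Sb f x" by auto
  thus ?thesis using xin by blast
qed

theorem lemma3:
  fixes S :: "'i::wellorder \<Rightarrow> 'a set"
    and f :: "'i \<Rightarrow> 'i \<Rightarrow> 'a \<Rightarrow> 'a"
    and sc :: "'r::ring_1 \<Rightarrow> 'n::ab_group_add \<Rightarrow> 'n"
  assumes omega1: "is_omega1_type TYPE('i)"
    and nonempty: "\<And>a. S a \<noteq> {}"
    and surj: "\<And>a b. a \<le> b \<Longrightarrow> f a b ` S b = S a"
    and refl: "\<And>a x. x \<in> S a \<Longrightarrow> f a a x = x"
    and comp: "\<And>a b c x. a \<le> b \<Longrightarrow> b \<le> c \<Longrightarrow> x \<in> S c \<Longrightarrow> f a b (f b c x) = f a c x"
    and empty_lim: "inv_lim S f = {}"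
    and module: "left_module sc"
  shows "(\<forall>a b. a \<le> b \<longrightarrow> dirsum_map (S a) (S b) (f a b) ` dirsum (S b) = (dirsum (S a) :: ('a \<Rightarrow> 'n) set))
         \<and> inv_lim (\<lambda>a. dirsum (S a) :: ('a \<Rightarrow> 'n) set) (\<lambda>a b. dirsum_map (S a) (S b) (f a b)) = {\<lambda>a i. 0}"
proof
  show "\<forall>a b. a \<le> b \<longrightarrow> dirsum_map (S a) (S b) (f a b) ` dirsum (S b) = (dirsum (S a) :: ('a \<Rightarrow> 'n) set)"
  proof (intro allI impI)
    fix a b :: 'i assume ab: "a \<le> b"
    show "dirsum_map (S a) (S b) (f a b) ` dirsum (S b) = (dirsum (S a) :: ('a \<Rightarrow> 'n) set)"
    proof
      show "dirsum_map (S a) (S b) (f a b) ` dirsum (S b) \<subseteq> (dirsum (S a) :: ('a \<Rightarrow> 'n) set)"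
        using dm_in by blast
      show "(dirsum (S a) :: ('a \<Rightarrow> 'n) set) \<subseteq> dirsum_map (S a) (S b) (f a b) ` dirsum (S b)"
        using dm_surj[OF surj[OF ab]] by blast
    qed
  qed
next
  have zd: "(\<lambda>i. 0) \<in> (dirsum A :: ('a \<Rightarrow> 'n) set)" for A by (simp add: dirsum_def)
  have zm: "dirsum_map A B h (\<lambda>i::'a. 0 :: 'n) = (\<lambda>i. 0)" for A B h
    unfolding dirsum_map_def by (rule ext) simp
  have "(\<lambda>a i. 0) \<in> inv_lim (\<lambda>a. dirsum (S a) :: ('a \<Rightarrow> 'n) set) (\<lambda>a b. dirsum_map (S a) (S b) (f a b))"
    unfolding inv_lim_def mem_Collect_eq using zd zm by blast
  moreover have "s = (\<lambda>a i. 0)"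
    if s: "s \<in> inv_lim (\<lambda>a. dirsum (S a) :: ('a \<Rightarrow> 'n) set) (\<lambda>a b. dirsum_map (S a) (S b) (f a b))" for s
  proof (rule ccontr)
    assume "s \<noteq> (\<lambda>a i. 0)"
    then obtain a0 where "s a0 \<noteq> (\<lambda>i. 0)" by auto
    then obtain i0 where ai: "s a0 i0 \<noteq> 0" by auto
    define T where "T b = {j. s b j \<noteq> 0}" for b
    have sin: "\<And>b. s b \<in> dirsum (S b)" and scomp: "\<And>a b. a \<le> b \<Longrightarrow> dirsum_map (S a) (S b) (f a b) (s b) = s a"
      using s by (auto simp: inv_lim_def)
    have TS: "T b \<subseteq> S b" and Tfin: "finite (T b)" for b
      using sin[of b] by (auto simp: dirsum_def T_def)
    have Tsub: "T a \<subseteq> f a b ` T b" if "a \<le> b" for a b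
    proof
      fix i assume "i \<in> T a"
      hence "dirsum_map (S a) (S b) (f a b) (s b) i \<noteq> 0" using scomp[OF that] by (simp add: T_def)
      thus "i \<in> f a b ` T b" using dm_supp[of "S a" "S b" "f a b" "s b" i] by (auto simp: T_def)
    qed
    have cmono: "card (T a) \<le> card (T b)" if "a \<le> b" for a b
      by (meson Tfin Tsub card_image_le card_mono finite_imageI le_trans that)
    have Tne: "T b \<noteq> {}" if "a0 \<le> b" for b
      using Tsub[OF that] ai by (auto simp: T_def)
    have bnd: "\<exists>M. \<forall>b. card (T b) \<le> M"
    proof (rule ccontr)
      assume "\<not> ?thesis"
      hence "\<forall>n. \<exists>b. n < card (T b)" by (meson not_le)
      then obtain bs where bs: "\<And>n. n < card (T (bs n))" by metis
      have "\<exists>g. \<forall>n. bs n \<le> g"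
      proof (rule ccontr)
        assume "\<not> ?thesis"
        hence "\<forall>x. \<exists>n. x < bs n" by (meson not_le)
        hence "UNIV = (\<Union>n. {x. x < bs n})" by auto
        moreover have "countable (\<Union>n. {x. x < bs n})"
          by (rule countable_UN) (use omega1 in \<open>auto simp: is_omega1_type_def\<close>)
        ultimately show False using omega1 by (simp add: is_omega1_type_def)
      qed
      then obtain g where "\<And>n. bs n \<le> g" by blast
      hence "\<And>n. n < card (T g)" using bs cmono le_less_trans by blast
      thus False by blast
    qed
    then obtain M where M: "\<And>b. card (T b) \<le> M" by blast
    define C where "C = card ` T ` {b. a0 \<le> b}"
    have Cfin: "finite C" using M by (intro finite_subset[of C "{..M}"]) (auto simp: C_def)
    have Cne: "C \<noteq> {}" by (auto simp: C_def)
    obtain g where g0: "a0 \<le> g" and gmax: "card (T g) = Max C"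
      using Max_in[OF Cfin Cne] by (auto simp: C_def)
    have cconst: "card (T b) = card (T g)" if "g \<le> b" for b
    proof -
      have "card (T b) \<in> C" using g0 that by (auto simp: C_def)
      hence "card (T b) \<le> card (T g)" using gmax Cfin by simp
      thus ?thesis using cmono[OF that] by simp
    qed
    have img: "f a b ` T b = T a" if "g \<le> a" "a \<le> b" for a b
    proof -
      have "card (f a b ` T b) \<le> card (T a)"
        using card_image_le[OF Tfin] cconst that by (metis order_trans)
      have "T a = f a b ` T b"
        by (rule card_seteq) (use Tsub[OF that(2)] Tfin \<open>card (f a b ` T b) \<le> card (T a)\<close> in auto)
      thus ?thesis by simp
    qed
    have inj: "inj_on (f a b) (T b)" if "g \<le> a" "a \<le> b" for a b
    proof -
      have "card (f a b ` T b) = card (T b)"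
        using img[OF that] cconst that by (metis order_trans)
      thus ?thesis using Tfin eq_card_imp_inj_on by blast
    qed
    obtain j0 where j0: "j0 \<in> T g" using Tne[OF g0] by blast
    have ex1: "\<exists>!j. j \<in> T b \<and> f g b j = j0" if "g \<le> b" for b
    proof -
      have "j0 \<in> f g b ` T b" using img[OF order_refl that] j0 by simp
      then obtain j where "j \<in> T b" "f g b j = j0" by blast
      moreover have "\<And>k. k \<in> T b \<Longrightarrow> f g b k = j0 \<Longrightarrow> k = j"
        using inj[OF order_refl that] calculation unfolding inj_on_def by metis
      ultimately show ?thesis by blast
    qed
    define t where "t b = (if g \<le> b then (THE j. j \<in> T b \<and> f g b j = j0) else f b g j0)" for b
    have tg: "t b \<in> T b \<and> f g b (t b) = j0" if "g \<le> b" for b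
      using theI'[OF ex1[OF that]] that by (simp add: t_def)
    have j0S: "j0 \<in> S g" using j0 TS by blast
    have tS: "t b \<in> S b" for b
    proof (cases "g \<le> b")
      case True thus ?thesis using tg TS by blast
    next
      case False
      hence "b \<le> g" by simp
      thus ?thesis using surj[OF \<open>b \<le> g\<close>] j0S False by (auto simp: t_def)
    qed
    have tc: "f a b (t b) = t a" if "a \<le> b" for a b
    proof (cases "g \<le> a")
      case True
      hence gb: "g \<le> b" using that by simp
      have u: "f a b (t b) \<in> T a" using img[OF True that] tg[OF gb] by blast
      have "f g a (f a b (t b)) = f g b (t b)" using comp[OF True that tS] .
      hence "f g a (f a b (t b)) = j0" using tg[OF gb] by simp
      thus ?thesis using ex1[OF True] u tg[OF True] by blast
    next
      case False
      hence ag: "a \<le> g" by simp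
      show ?thesis
      proof (cases "g \<le> b")
        case True
        have "f a g (f g b (t b)) = f a b (t b)" using comp[OF ag True tS] .
        thus ?thesis using tg[OF True] False by (simp add: t_def)
      next
        case False
        hence "b \<le> g" by simp
        thus ?thesis using comp[OF that \<open>b \<le> g\<close> j0S] False \<open>\<not> g \<le> a\<close>
          by (simp add: t_def)
      qed
    qed
    have "t \<in> inv_lim S f" using tS tc by (simp add: inv_lim_def)
    thus False using empty_lim by simp
  qed
  ultimately show "inv_lim (\<lambda>a. dirsum (S a) :: ('a \<Rightarrow> 'n) set) (\<lambda>a b. dirsum_map (S a) (S b) (f a b)) = {\<lambda>a i. 0}"
    by blast
qed

end
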